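(* A general map $\mathcal M=(B,\sigma,\alpha)$ has a single component (i.e. is a map) if and only if $\mathcal M$ has a quasi-tree.
   Context: A general map is a triple $\mathcal M=(B,\sigma,\alpha)$ where $B$ is a finite set (of flags), $\sigma,\alpha$ are permutations of $B$, and $\alpha$ is a fixed-point-free involution. Its components are the orbits of the group $\langle\sigma,\alpha\rangle$ on $B$; it is a map if $\langle\sigma,\alpha\rangle$ acts transitively on $B$. The edges of $\mathcal M$ are the cycles of $\alpha$ (two-element sets); for $b\in B$ write $\underline b=\{b,\alpha(b)\}$. For a set $F$ of edges, let $\alpha_F$ be the permutation of $B$ equal to $\alpha$ on $\bigcup F$ and to the identity elsewhere; the tour of $F$ in $\mathcal M$ is the permutation $\tau=\sigma\alpha_F$, i.e. $\tau(b)=\sigma(\alpha(b))$ if $\underline b\in F$ and $\tau(b)=\sigma(b)$ otherwise. A quasi-tree of $\mathcal M$ is a set $F$ of edges whose tour in $\mathcal M$ is a single cycle (a cyclic permutation of all of $B$). *)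

theory Defs
  imports "HOL-Combinatorics.Permutations"
begin

definition general_map :: "'a set \<Rightarrow> ('a \<Rightarrow> 'a) \<Rightarrow> ('a \<Rightarrow> 'a) \<Rightarrow> bool" where
  "general_map B \<sigma> \<alpha> \<longleftrightarrow> finite B \<and> \<sigma> permutes B \<and> \<alpha> permutes B \<and>
     (\<forall>b\<in>B. \<alpha> (\<alpha> b) = b \<and> \<alpha> b \<noteq> b)"

text \<open>Transitivity of the group generated by sigma and alpha: any flag is reachable
  from any other by applying sigma, alpha and their inverses.\<close>
definition is_map :: "'a set \<Rightarrow> ('a \<Rightarrow> 'a) \<Rightarrow> ('a \<Rightarrow> 'a) \<Rightarrow> bool" where
  "is_map B \<sigma> \<alpha> \<longleftrightarrow>
     (\<forall>b\<in>B. \<forall>c\<in>B. (b, c) \<in> ({(x, \<sigma> x) | x. x \<in> B} \<union> {(\<sigma> x, x) | x. x \<in> B}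
                              \<union> {(x, \<alpha> x) | x. x \<in> B} \<union> {(\<alpha> x, x) | x. x \<in> B})\<^sup>*)"

definition edges :: "'a set \<Rightarrow> ('a \<Rightarrow> 'a) \<Rightarrow> 'a set set" where
  "edges B \<alpha> = {{b, \<alpha> b} | b. b \<in> B}"

definition alpha_F :: "('a \<Rightarrow> 'a) \<Rightarrow> 'a set set \<Rightarrow> 'a \<Rightarrow> 'a" where
  "alpha_F \<alpha> F = (\<lambda>b. if b \<in> \<Union>F then \<alpha> b else b)"

definition tour :: "('a \<Rightarrow> 'a) \<Rightarrow> ('a \<Rightarrow> 'a) \<Rightarrow> 'a set set \<Rightarrow> 'a \<Rightarrow> 'a" where
  "tour \<sigma> \<alpha> F = \<sigma> \<circ> alpha_F \<alpha> F"

definition single_cycle_on :: "'a set \<Rightarrow> ('a \<Rightarrow> 'a) \<Rightarrow> bool" where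
  "single_cycle_on B \<tau> \<longleftrightarrow> \<tau> permutes B \<and> (\<forall>b\<in>B. \<forall>c\<in>B. \<exists>n. (\<tau> ^^ n) b = c)"

definition quasi_tree :: "'a set \<Rightarrow> ('a \<Rightarrow> 'a) \<Rightarrow> ('a \<Rightarrow> 'a) \<Rightarrow> 'a set set \<Rightarrow> bool" where
  "quasi_tree B \<sigma> \<alpha> F \<longleftrightarrow> F \<subseteq> edges B \<alpha> \<and> single_cycle_on B (tour \<sigma> \<alpha> F)"

end

theory Submission
  imports Defs "HOL-Combinatorics.Cycles"
begin

definition orb :: "('a \<Rightarrow> 'a) \<Rightarrow> 'a \<Rightarrow> 'a set" where
  "orb t a = {c. \<exists>n. (t ^^ n) a = c}"

lemma orb_self: "a \<in> orb t a"
  unfolding orb_def by (rule CollectI, rule exI[of _ 0]) simp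

lemma orb_step: "z \<in> orb t a \<Longrightarrow> t z \<in> orb t a"
proof -
  assume "z \<in> orb t a"
  then obtain n where "(t ^^ n) a = z" unfolding orb_def by blast
  hence "(t ^^ Suc n) a = t z" by simp
  thus ?thesis unfolding orb_def by blast
qed

lemma orb_closed:
  assumes "\<And>z. z \<in> S \<Longrightarrow> t z \<in> S" "a \<in> S"
  shows "orb t a \<subseteq> S"
proof
  fix c assume "c \<in> orb t a"
  then obtain n where "(t ^^ n) a = c" unfolding orb_def by blast
  moreover have "(t ^^ n) a \<in> S" for n by (induction n) (use assms in auto)
  ultimately show "c \<in> S" by blast
qed

lemma orb_trans: "c \<in> orb t b \<Longrightarrow> b \<in> orb t a \<Longrightarrow> c \<in> orb t a"
proof -
  assume c: "c \<in> orb t b" and b: "b \<in> orb t a"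
  have "orb t b \<subseteq> orb t a"
    by (rule orb_closed[of "orb t a" t b]) (rule orb_step, assumption, rule b)
  thus ?thesis using c by blast
qed

lemma orb_sym:
  assumes "t permutes B" "finite B" "b \<in> orb t a"
  shows "a \<in> orb t b"
proof -
  have "permutation t" using assms permutation_permutes by blast
  then obtain N where N: "(t ^^ N) = id" "N > 0" by (rule permutation_is_nilpotent)
  obtain m where m: "(t ^^ m) a = b" using assms(3) unfolding orb_def by blast
  have pw: "(t ^^ (N*k)) a = a" for k
  proof (induction k)
    case (Suc k)
    have "(t ^^ (N * Suc k)) a = (t ^^ N) ((t ^^ (N*k)) a)"
      by (metis funpow_add mult_Suc_right o_apply)
    thus ?case using Suc N(1) by simp
  qed simp
  have "(t ^^ (N*m - m)) b = (t ^^ (N*m - m + m)) a" using m by (simp add: funpow_add)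
  also have "N*m - m + m = N*m" using N by (simp add: le_add_diff_inverse2)
  also have "(t ^^ (N*m)) a = a" using pw by blast
  finally show ?thesis unfolding orb_def by blast
qed

lemma grow1:
  assumes "t permutes B" "finite B" "y \<notin> orb t x" "x \<in> B" "y \<in> B"
  shows "y \<in> orb (t \<circ> transpose x y) x"
proof (rule ccontr)
  let ?t' = "t \<circ> transpose x y"
  let ?T = "orb ?t' x" and ?U = "orb t y"
  assume ny: "y \<notin> ?T"
  have xU: "x \<notin> ?U" using orb_sym[OF assms(1,2)] assms(3) by blast
  have cl: "t z \<in> ?T \<inter> ?U" if "z \<in> ?T \<inter> ?U" for z
  proof -
    have "z \<noteq> x" "z \<noteq> y" using that xU ny by auto
    hence "t z = ?t' z" by simp
    thus ?thesis using that orb_step[of z ?t' x] orb_step[of z t y] by auto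
  qed
  have ty: "t y \<in> ?T \<inter> ?U"
  proof -
    have "?t' x = t y" by simp
    thus ?thesis using orb_step[OF orb_self, of ?t' x] orb_step[OF orb_self, of t y] by auto
  qed
  have "orb t (t y) \<subseteq> ?T \<inter> ?U" by (rule orb_closed[OF cl ty])
  moreover have "y \<in> orb t (t y)" by (rule orb_sym[OF assms(1,2)], rule orb_step[OF orb_self])
  ultimately show False using ny by blast
qed

lemma grow:
  assumes "t permutes B" "finite B" "x \<in> orb t b0" "y \<notin> orb t b0" "x \<in> B" "y \<in> B"
  shows "orb t b0 \<subseteq> orb (t \<circ> transpose x y) b0 \<and> y \<in> orb (t \<circ> transpose x y) b0"
proof -
  let ?t' = "t \<circ> transpose x y"
  let ?S = "orb ?t' b0"
  have yx: "y \<notin> orb t x" using orb_trans[OF _ assms(3)] assms(4) by blast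
  have xy: "x \<notin> orb t y" using orb_sym[OF assms(1,2)] yx by blast
  have s1: "y \<in> orb ?t' x" by (rule grow1[OF assms(1,2) yx assms(5,6)])
  have tc: "transpose y x = transpose x y" by (rule transpose_commute)
  have s2: "x \<in> orb ?t' y" using grow1[OF assms(1,2) xy assms(6,5)] unfolding tc .
  have oth: "t z = ?t' z" if "z \<noteq> x" "z \<noteq> y" for z
    using that by (simp add: transpose_apply_other)
  have tx: "?t' x = t y" and ty: "?t' y = t x" by simp_all
  have xS: "x \<in> ?S"
  proof (rule ccontr)
    assume nx: "x \<notin> ?S"
    hence nyS: "y \<notin> ?S" using orb_trans[OF s2] by blast
    have "orb t b0 \<subseteq> ?S"
    proof (rule orb_closed[OF _ orb_self])
      fix z assume z: "z \<in> ?S"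
      hence "z \<noteq> x" "z \<noteq> y" using nx nyS by auto
      hence "t z = ?t' z" by (rule oth)
      thus "t z \<in> ?S" using orb_step[OF z] by simp
    qed
    thus False using nx assms(3) by blast
  qed
  have yS: "y \<in> ?S" by (rule orb_trans[OF s1 xS])
  have "orb t b0 \<subseteq> ?S"
  proof (rule orb_closed[OF _ orb_self])
    fix z assume z: "z \<in> ?S"
    show "t z \<in> ?S"
    proof (cases "z = x \<or> z = y")
      case True
      then show ?thesis using orb_step[OF xS] orb_step[OF yS] tx ty by auto
    next
      case False
      then have "t z = ?t' z" using oth by blast
      then show ?thesis using orb_step[OF z] by simp
    qed
  qed
  thus ?thesis using yS by blast
qed

lemma gm_facts:
  assumes "general_map B \<sigma> \<alpha>"
  shows "finite B" "\<sigma> permutes B" "\<alpha> permutes B" "\<And>b. b \<in> B \<Longrightarrow> \<alpha> (\<alpha> b) = b"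
    "\<And>b. b \<in> B \<Longrightarrow> \<alpha> b \<noteq> b" "\<And>b. b \<in> B \<Longrightarrow> \<alpha> b \<in> B" "\<And>b. b \<in> B \<Longrightarrow> \<sigma> b \<in> B"
  using assms unfolding general_map_def by (auto simp: permutes_in_image)

lemma edges_mem:
  assumes "general_map B \<sigma> \<alpha>" "F \<subseteq> edges B \<alpha>" "z \<in> B"
  shows "z \<in> \<Union>F \<longleftrightarrow> {z, \<alpha> z} \<in> F"
proof
  assume "z \<in> \<Union>F"
  then obtain e where e: "e \<in> F" "z \<in> e" by blast
  then obtain c where c: "c \<in> B" "e = {c, \<alpha> c}" using assms(2) unfolding edges_def by blast
  have "e = {z, \<alpha> z}"
  proof (cases "z = c")
    case False
    hence "z = \<alpha> c" using c e by blast
    hence "\<alpha> z = c" using gm_facts(4)[OF assms(1) c(1)] by simp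
    thus ?thesis using c \<open>z = \<alpha> c\<close> by (simp add: insert_commute)
  qed (use c in simp)
  thus "{z, \<alpha> z} \<in> F" using e by simp
qed blast

lemma edges_sub:
  assumes "general_map B \<sigma> \<alpha>" "F \<subseteq> edges B \<alpha>"
  shows "\<Union>F \<subseteq> B"
proof
  fix z assume "z \<in> \<Union>F"
  then obtain e where e: "e \<in> F" "z \<in> e" by blast
  then obtain c where c: "c \<in> B" "e = {c, \<alpha> c}" using assms(2) unfolding edges_def by blast
  thus "z \<in> B" using e gm_facts(6)[OF assms(1)] by blast
qed

lemma aF_inv:
  assumes "general_map B \<sigma> \<alpha>" "F \<subseteq> edges B \<alpha>"
  shows "alpha_F \<alpha> F (alpha_F \<alpha> F z) = z"
proof (cases "z \<in> \<Union>F")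
  case True
  hence zB: "z \<in> B" using edges_sub[OF assms] by blast
  have "{\<alpha> z, \<alpha> (\<alpha> z)} = {z, \<alpha> z}" using gm_facts(4)[OF assms(1) zB] by auto
  hence "\<alpha> z \<in> \<Union>F" using True edges_mem[OF assms zB] by auto
  thus ?thesis using True gm_facts(4)[OF assms(1) zB] unfolding alpha_F_def by simp
qed (simp add: alpha_F_def)

lemma aF_B:
  assumes "general_map B \<sigma> \<alpha>" "z \<in> B"
  shows "alpha_F \<alpha> F z \<in> B"
  using gm_facts(6)[OF assms] assms(2) unfolding alpha_F_def by simp

lemma aF_perm:
  assumes "general_map B \<sigma> \<alpha>" "F \<subseteq> edges B \<alpha>"
  shows "alpha_F \<alpha> F permutes B"
  unfolding permutes_def
proof (intro conjI allI impI)
  fix z assume "z \<notin> B"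
  thus "alpha_F \<alpha> F z = z" using edges_sub[OF assms] unfolding alpha_F_def by auto
next
  fix y show "\<exists>!x. alpha_F \<alpha> F x = y"
    by (rule ex1I[of _ "alpha_F \<alpha> F y"]) (metis aF_inv[OF assms])+
qed

lemma tour_perm:
  assumes "general_map B \<sigma> \<alpha>" "F \<subseteq> edges B \<alpha>"
  shows "tour \<sigma> \<alpha> F permutes B"
  unfolding tour_def by (rule permutes_compose[OF aF_perm[OF assms] gm_facts(2)[OF assms(1)]])

definition toggle :: "('a \<Rightarrow> 'a) \<Rightarrow> 'a set set \<Rightarrow> 'a \<Rightarrow> 'a set set" where
  "toggle \<alpha> F b = (if {b, \<alpha> b} \<in> F then F - {{b, \<alpha> b}} else insert {b, \<alpha> b} F)"

lemma toggle_sub: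
  assumes "F \<subseteq> edges B \<alpha>" "b \<in> B"
  shows "toggle \<alpha> F b \<subseteq> edges B \<alpha>"
  using assms unfolding toggle_def edges_def by auto

lemma toggle_aF:
  assumes gm: "general_map B \<sigma> \<alpha>" and F: "F \<subseteq> edges B \<alpha>" and b: "b \<in> B"
  shows "alpha_F \<alpha> (toggle \<alpha> F b) = alpha_F \<alpha> F \<circ> transpose b (\<alpha> b)"
proof
  fix z
  let ?F' = "toggle \<alpha> F b"
  have F': "?F' \<subseteq> edges B \<alpha>" by (rule toggle_sub[OF F b])
  have ab: "\<alpha> b \<in> B" "\<alpha> (\<alpha> b) = b" "\<alpha> b \<noteq> b" using gm_facts[OF gm] b by auto
  show "alpha_F \<alpha> ?F' z = (alpha_F \<alpha> F \<circ> transpose b (\<alpha> b)) z"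
  proof (cases "z \<in> B")
    case False
    hence "z \<notin> \<Union>?F'" "z \<notin> \<Union>F" using edges_sub[OF gm F'] edges_sub[OF gm F] by auto
    moreover have "z \<noteq> b" "z \<noteq> \<alpha> b" using False b ab by auto
    ultimately show ?thesis unfolding alpha_F_def by simp
  next
    case True
    have m1: "z \<in> \<Union>?F' \<longleftrightarrow> {z, \<alpha> z} \<in> ?F'" by (rule edges_mem[OF gm F' True])
    have m2: "z \<in> \<Union>F \<longleftrightarrow> {z, \<alpha> z} \<in> F" by (rule edges_mem[OF gm F True])
    have mb: "b \<in> \<Union>F \<longleftrightarrow> {b, \<alpha> b} \<in> F" by (rule edges_mem[OF gm F b])
    have ma: "\<alpha> b \<in> \<Union>F \<longleftrightarrow> {b, \<alpha> b} \<in> F"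
      using edges_mem[OF gm F ab(1)] ab(2) by (simp add: insert_commute)
    show ?thesis
    proof (cases "z = b \<or> z = \<alpha> b")
      case True
      then show ?thesis
      proof
        assume zb: "z = b"
        show ?thesis using m1 ma ab unfolding zb alpha_F_def toggle_def by auto
      next
        assume za: "z = \<alpha> b"
        have "{z, \<alpha> z} = {b, \<alpha> b}" using za ab by auto
        then show ?thesis using m1 mb ab za unfolding alpha_F_def toggle_def by auto
      qed
    next
      case False
      have "{z, \<alpha> z} \<noteq> {b, \<alpha> b}" using False by auto
      hence "{z, \<alpha> z} \<in> ?F' \<longleftrightarrow> {z, \<alpha> z} \<in> F" unfolding toggle_def by auto
      then show ?thesis using m1 m2 False unfolding alpha_F_def by simp
    qed
  qed
qed

lemma step:
  assumes gm: "general_map B \<sigma> \<alpha>" and im: "is_map B \<sigma> \<alpha>" and b0: "b0 \<in> B"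
    and F: "F \<subseteq> edges B \<alpha>" and ne: "orb (tour \<sigma> \<alpha> F) b0 \<noteq> B"
  shows "\<exists>F'. F' \<subseteq> edges B \<alpha> \<and> orb (tour \<sigma> \<alpha> F) b0 \<subset> orb (tour \<sigma> \<alpha> F') b0"
proof -
  let ?t = "tour \<sigma> \<alpha> F"
  let ?O = "orb ?t b0"
  have tp: "?t permutes B" by (rule tour_perm[OF gm F])
  have fin: "finite B" using gm_facts(1)[OF gm] .
  have OB: "?O \<subseteq> B" by (rule orb_closed) (use tp b0 in \<open>auto simp: permutes_in_image\<close>)
  have "\<exists>b\<in>?O. \<alpha> b \<notin> ?O"
  proof (rule ccontr)
    assume "\<not> (\<exists>b\<in>?O. \<alpha> b \<notin> ?O)"
    hence acl: "\<And>z. z \<in> ?O \<Longrightarrow> \<alpha> z \<in> ?O" by blast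
    have scl: "\<sigma> z \<in> ?O" if z: "z \<in> ?O" for z
    proof -
      have "alpha_F \<alpha> F z \<in> ?O" using z acl[OF z] unfolding alpha_F_def by simp
      hence "?t (alpha_F \<alpha> F z) \<in> ?O" by (rule orb_step)
      thus ?thesis using aF_inv[OF gm F] unfolding tour_def by simp
    qed
    have simg: "\<sigma> ` ?O = ?O"
      by (rule endo_inj_surj) (use fin OB scl permutes_inj[OF gm_facts(2)[OF gm]] in
           \<open>auto intro: finite_subset inj_on_subset\<close>)
    have sinv: "x \<in> ?O" if "\<sigma> x \<in> ?O" for x
    proof -
      from that simg obtain y where "y \<in> ?O" "\<sigma> y = \<sigma> x" by (metis imageE)
      thus ?thesis using permutes_inj[OF gm_facts(2)[OF gm]] by (metis injD)
    qed
    have ainv: "x \<in> ?O" if "\<alpha> x \<in> ?O" "x \<in> B" for x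
      using acl[OF that(1)] gm_facts(4)[OF gm that(2)] by simp
    have "B \<subseteq> ?O"
    proof
      fix c assume c: "c \<in> B"
      let ?R = "{(x, \<sigma> x) | x. x \<in> B} \<union> {(\<sigma> x, x) | x. x \<in> B}
                              \<union> {(x, \<alpha> x) | x. x \<in> B} \<union> {(\<alpha> x, x) | x. x \<in> B}"
      have "(b0, c) \<in> ?R\<^sup>*" using im b0 c unfolding is_map_def by blast
      thus "c \<in> ?O"
      proof (induction rule: rtrancl_induct)
        case base
        then show ?case by (rule orb_self)
      next
        case (step y z)
        from step.hyps(2) show ?case
          using step.IH scl sinv acl ainv by blast
      qed
    qed
    thus False using OB ne by blast
  qed
  then obtain b where bO: "b \<in> ?O" and abO: "\<alpha> b \<notin> ?O" by blast
  have bB: "b \<in> B" using bO OB by blast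
  have abB: "\<alpha> b \<in> B" using gm_facts(6)[OF gm bB] .
  let ?F' = "toggle \<alpha> F b"
  have F': "?F' \<subseteq> edges B \<alpha>" by (rule toggle_sub[OF F bB])
  have "tour \<sigma> \<alpha> ?F' = ?t \<circ> transpose b (\<alpha> b)"
    unfolding tour_def toggle_aF[OF gm F bB] by (simp add: o_assoc)
  hence "?O \<subseteq> orb (tour \<sigma> \<alpha> ?F') b0 \<and> \<alpha> b \<in> orb (tour \<sigma> \<alpha> ?F') b0"
    using grow[OF tp fin bO abO bB abB] by simp
  thus ?thesis using F' abO by blast
qed

lemma exists_full:
  assumes gm: "general_map B \<sigma> \<alpha>" and im: "is_map B \<sigma> \<alpha>" and b0: "b0 \<in> B"
  shows "\<forall>F. F \<subseteq> edges B \<alpha> \<longrightarrow> card B - card (orb (tour \<sigma> \<alpha> F) b0) \<le> n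
     \<longrightarrow> (\<exists>F'. F' \<subseteq> edges B \<alpha> \<and> orb (tour \<sigma> \<alpha> F') b0 = B)"
proof (induction n)
  have fin: "finite B" using gm_facts(1)[OF gm] .
  have OB: "orb (tour \<sigma> \<alpha> F) b0 \<subseteq> B" if "F \<subseteq> edges B \<alpha>" for F
    by (rule orb_closed) (use tour_perm[OF gm that] b0 in \<open>auto simp: permutes_in_image\<close>)
  {
    case 0
    show ?case
    proof (intro allI impI)
      fix F assume F: "F \<subseteq> edges B \<alpha>" and c: "card B - card (orb (tour \<sigma> \<alpha> F) b0) \<le> 0"
      have "orb (tour \<sigma> \<alpha> F) b0 = B"
        by (rule card_subset_eq[OF fin OB[OF F]]) (use c card_mono[OF fin OB[OF F]] in simp)
      thus "\<exists>F'. F' \<subseteq> edges B \<alpha> \<and> orb (tour \<sigma> \<alpha> F') b0 = B" using F by blast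
    qed
  next
    case (Suc n)
    show ?case
    proof (intro allI impI)
      fix F assume F: "F \<subseteq> edges B \<alpha>" and c: "card B - card (orb (tour \<sigma> \<alpha> F) b0) \<le> Suc n"
      show "\<exists>F'. F' \<subseteq> edges B \<alpha> \<and> orb (tour \<sigma> \<alpha> F') b0 = B"
      proof (cases "orb (tour \<sigma> \<alpha> F) b0 = B")
        case True
        then show ?thesis using F by blast
      next
        case False
        then obtain F' where F': "F' \<subseteq> edges B \<alpha>"
          and ps: "orb (tour \<sigma> \<alpha> F) b0 \<subset> orb (tour \<sigma> \<alpha> F') b0"
          using step[OF gm im b0 F] by blast
        have "card (orb (tour \<sigma> \<alpha> F) b0) < card (orb (tour \<sigma> \<alpha> F') b0)"
          by (rule psubset_card_mono[OF finite_subset[OF OB[OF F'] fin] ps])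
        moreover have "card (orb (tour \<sigma> \<alpha> F') b0) \<le> card B" by (rule card_mono[OF fin OB[OF F']])
        ultimately have "card B - card (orb (tour \<sigma> \<alpha> F') b0) \<le> n" using c by linarith
        thus ?thesis using Suc.IH F' by blast
      qed
    qed
  }
qed

theorem lemma2:
  assumes "general_map B \<sigma> \<alpha>"
  shows "is_map B \<sigma> \<alpha> \<longleftrightarrow> (\<exists>F. quasi_tree B \<sigma> \<alpha> F)"
proof
  assume im: "is_map B \<sigma> \<alpha>"
  show "\<exists>F. quasi_tree B \<sigma> \<alpha> F"
  proof (cases "B = {}")
    case True
    have "{} \<subseteq> edges B \<alpha>" by simp
    thus ?thesis using tour_perm[OF assms] True unfolding quasi_tree_def single_cycle_on_def by blast
  next
    case False
    then obtain b0 where b0: "b0 \<in> B" by blast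
    have "{} \<subseteq> edges B \<alpha>" by simp
    then obtain F where F: "F \<subseteq> edges B \<alpha>" and full: "orb (tour \<sigma> \<alpha> F) b0 = B"
      using exists_full[OF assms im b0, of "card B"] by auto
    have tp: "tour \<sigma> \<alpha> F permutes B" by (rule tour_perm[OF assms F])
    have fin: "finite B" using gm_facts(1)[OF assms] .
    have "\<exists>n. (tour \<sigma> \<alpha> F ^^ n) b = c" if "b \<in> B" "c \<in> B" for b c
    proof -
      have "b0 \<in> orb (tour \<sigma> \<alpha> F) b" by (rule orb_sym[OF tp fin]) (use that full in simp)
      hence "c \<in> orb (tour \<sigma> \<alpha> F) b" using orb_trans[of c _ b0 b] that full by simp
      thus ?thesis unfolding orb_def by blast
    qed
    thus ?thesis using F tp unfolding quasi_tree_def single_cycle_on_def by blast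
  qed
next
  assume "\<exists>F. quasi_tree B \<sigma> \<alpha> F"
  then obtain F where F: "F \<subseteq> edges B \<alpha>" and sc: "single_cycle_on B (tour \<sigma> \<alpha> F)"
    unfolding quasi_tree_def by blast
  let ?R = "{(x, \<sigma> x) | x. x \<in> B} \<union> {(\<sigma> x, x) | x. x \<in> B}
                              \<union> {(x, \<alpha> x) | x. x \<in> B} \<union> {(\<alpha> x, x) | x. x \<in> B}"
  have key: "(b, (tour \<sigma> \<alpha> F ^^ n) b) \<in> ?R\<^sup>* \<and> (tour \<sigma> \<alpha> F ^^ n) b \<in> B" if b: "b \<in> B" for b n
  proof (induction n)
    case 0
    then show ?case using b by simp
  next
    case (Suc n)
    let ?z = "(tour \<sigma> \<alpha> F ^^ n) b"
    have zB: "?z \<in> B" and r1: "(b, ?z) \<in> ?R\<^sup>*" using Suc by auto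
    have aB: "alpha_F \<alpha> F ?z \<in> B" by (rule aF_B[OF assms zB])
    have r2: "(?z, alpha_F \<alpha> F ?z) \<in> ?R\<^sup>*"
    proof (cases "?z \<in> \<Union>F")
      case True
      hence "(?z, alpha_F \<alpha> F ?z) \<in> ?R" using zB unfolding alpha_F_def by auto
      thus ?thesis by blast
    next
      case False
      thus ?thesis unfolding alpha_F_def by simp
    qed
    have r3: "(alpha_F \<alpha> F ?z, \<sigma> (alpha_F \<alpha> F ?z)) \<in> ?R" using aB by blast
    have eq: "(tour \<sigma> \<alpha> F ^^ Suc n) b = \<sigma> (alpha_F \<alpha> F ?z)" by (simp add: tour_def)
    have "(b, \<sigma> (alpha_F \<alpha> F ?z)) \<in> ?R\<^sup>*"
      using rtrancl_trans[OF r1 rtrancl_into_rtrancl[OF r2 r3]] .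
    moreover have "\<sigma> (alpha_F \<alpha> F ?z) \<in> B" by (rule gm_facts(7)[OF assms aB])
    ultimately show ?case unfolding eq by simp
  qed
  show "is_map B \<sigma> \<alpha>" unfolding is_map_def
  proof (intro ballI)
    fix b c assume b: "b \<in> B" and c: "c \<in> B"
    then obtain n where "(tour \<sigma> \<alpha> F ^^ n) b = c" using sc unfolding single_cycle_on_def by blast
    thus "(b, c) \<in> ?R\<^sup>*" using key[OF b, of n] by simp
  qed
qed

end
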